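(* Let $\eta$ be a homogeneous integrable 2-form of degree two on $\mathbb{C}^4$ such that, with $\nu=dz_1\wedge\cdots\wedge dz_4$ and $X$ defined by $d\eta=i_X\nu$, one has $X\not\equiv0$ and $\eta=i_Yi_X\nu$ for some linear vector field $Y$. Let $R=\sum_j z_j\,\partial/\partial z_j$ and $\omega=i_R\eta$. Then for every $s\in\mathbb{C}$ the 2-form $\eta_s=\eta+s\,d\omega$ is integrable; more precisely $\eta_s\wedge\eta_s=0$, $d\eta_s=i_X\nu$ and $i_X\eta_s=0$.
   Context: A form is homogeneous of degree $m$ if its coefficients are homogeneous polynomials of degree $m$. A holomorphic $q$-form $\eta$ is integrable if every point $p$ outside its zero set has a neighborhood $V$ with holomorphic 1-forms $\omega_1,\dots,\omega_q$ on $V$ such that $\eta|_V=\omega_1\wedge\cdots\wedge\omega_q$ and $d\omega_j\wedge\eta=0$ for all $j$. *)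

theory Defs
  imports "HOL-Analysis.Analysis"
begin

text \<open>A form is given by its coefficient functions: the coefficient of
dz_{i_1} wedge ... wedge dz_{i_k} (i_1 < ... < i_k) is  alpha {i_1,...,i_k}.\<close>

type_synonym 'n cform = "'n set \<Rightarrow> complex^'n \<Rightarrow> complex"

definition form_deg :: "nat \<Rightarrow> ('n::{finite,linorder}) cform \<Rightarrow> bool" where
  "form_deg k \<alpha> \<longleftrightarrow> (\<forall>S. card S \<noteq> k \<longrightarrow> \<alpha> S = (\<lambda>_. 0))"

text \<open>sign of dz_A wedge dz_B = sgn A B * dz_(A union B) for disjoint A, B\<close>
definition sgn_pair :: "('n::{finite,linorder}) set \<Rightarrow> 'n set \<Rightarrow> complex" where
  "sgn_pair A B = (-1) ^ card {(a,b). a \<in> A \<and> b \<in> B \<and> b < a}"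

definition wedge :: "('n::{finite,linorder}) cform \<Rightarrow> 'n cform \<Rightarrow> 'n cform" where
  "wedge \<alpha> \<beta> = (\<lambda>S z. \<Sum>A\<in>Pow S. sgn_pair A (S - A) * \<alpha> A z * \<beta> (S - A) z)"

definition unit_form :: "('n::{finite,linorder}) cform" where
  "unit_form = (\<lambda>S z. if S = {} then 1 else 0)"

fun wedge_list :: "('n::{finite,linorder}) cform list \<Rightarrow> 'n cform" where
  "wedge_list [] = unit_form"
| "wedge_list (\<omega> # \<omega>s) = wedge \<omega> (wedge_list \<omega>s)"

definition cpartial :: "(complex^('n::finite) \<Rightarrow> complex) \<Rightarrow> 'n \<Rightarrow> complex^'n \<Rightarrow> complex" where
  "cpartial f i z = deriv (\<lambda>t. f (\<chi> j. z$j + (if j = i then t else 0))) 0"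

definition ext_d :: "('n::{finite,linorder}) cform \<Rightarrow> 'n cform" where
  "ext_d \<alpha> = (\<lambda>S z. \<Sum>i\<in>S. sgn_pair {i} (S - {i}) * cpartial (\<alpha> (S - {i})) i z)"

definition interior :: "(complex^('n::{finite,linorder}) \<Rightarrow> complex^('n::{finite,linorder})) \<Rightarrow> ('n::{finite,linorder}) cform \<Rightarrow> ('n::{finite,linorder}) cform" where
  "interior X \<alpha> = (\<lambda>T z. \<Sum>i\<in>UNIV - T. sgn_pair {i} T * (X z)$i * \<alpha> (insert i T) z)"

definition vol_form :: "('n::{finite,linorder}) cform" where
  "vol_form = (\<lambda>S z. if S = UNIV then 1 else 0)"

definition holo_on :: "(complex^('n::finite) \<Rightarrow> complex) \<Rightarrow> (complex^'n) set \<Rightarrow> bool" where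
  "holo_on f V \<longleftrightarrow> (\<forall>p\<in>V. \<exists>L. (f has_derivative L) (at p) \<and>
      (\<forall>c v. L (\<chi> j. c * v$j) = c * L v))"

definition holo_form_on :: "('n::{finite,linorder}) cform \<Rightarrow> (complex^('n::{finite,linorder})) set \<Rightarrow> bool" where
  "holo_form_on \<alpha> V \<longleftrightarrow> (\<forall>S. holo_on (\<alpha> S) V)"

definition zero_set :: "('n::{finite,linorder}) cform \<Rightarrow> (complex^('n::{finite,linorder})) set" where
  "zero_set \<eta> = {p. \<forall>S. \<eta> S p = 0}"

definition integrable_form :: "nat \<Rightarrow> ('n::{finite,linorder}) cform \<Rightarrow> bool" where
  "integrable_form q \<eta> \<longleftrightarrow>
     (\<forall>p. p \<notin> zero_set \<eta> \<longrightarrow>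
        (\<exists>V \<omega>s. open V \<and> p \<in> V \<and> length \<omega>s = q \<and>
           (\<forall>\<omega>\<in>set \<omega>s. form_deg 1 \<omega> \<and> holo_form_on \<omega> V) \<and>
           (\<forall>S. \<forall>z\<in>V. \<eta> S z = wedge_list \<omega>s S z) \<and>
           (\<forall>\<omega>\<in>set \<omega>s. \<forall>S. \<forall>z\<in>V. wedge (ext_d \<omega>) \<eta> S z = 0)))"

definition homog_deg2_form :: "('n::{finite,linorder}) cform \<Rightarrow> bool" where
  "homog_deg2_form \<eta> \<longleftrightarrow>
     (\<forall>S. \<exists>a::'n \<Rightarrow> 'n \<Rightarrow> complex. \<forall>z. \<eta> S z = (\<Sum>k\<in>UNIV. \<Sum>l\<in>UNIV. a k l * z$k * z$l))"

definition linear_vf :: "(complex^('n::finite) \<Rightarrow> complex^'n) \<Rightarrow> bool" where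
  "linear_vf Y \<longleftrightarrow> (\<exists>B::'n \<Rightarrow> 'n \<Rightarrow> complex. \<forall>z i. (Y z)$i = (\<Sum>k\<in>UNIV. B i k * z$k))"

end

theory Submission
  imports Defs
begin


lemma filter_insert_set: "{y \<in> insert u U. P y} = (if P u then insert u {y\<in>U. P y} else {y\<in>U. P y})"
  by auto
lemma filter_empty_set: "{y \<in> {}. P y} = {}" by auto

lemma sgn_pair_empty[simp]: "sgn_pair {} B = 1"
  unfolding sgn_pair_def by simp

definition cnt :: "'n::linorder \<Rightarrow> 'n set \<Rightarrow> nat" where "cnt x B = card {y\<in>B. y<x}"

lemma cnt_empty[simp]: "cnt x {} = 0" by (simp add: cnt_def)
lemma cnt_insert: "finite U \<Longrightarrow> cnt x (insert u U) = (if u < x \<and> u \<notin> U then Suc (cnt x U) else cnt x U)"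
proof (cases "u < x \<and> u \<notin> U")
  case True
  assume f: "finite U"
  have "{y\<in>insert u U. y<x} = insert u {y\<in>U. y<x}" using True by auto
  then show ?thesis using True f unfolding cnt_def by simp
next
  case False
  then have "{y\<in>insert u U. y<x} = {y\<in>U. y<x}" by auto
  then show ?thesis using False unfolding cnt_def by simp
qed

lemma sgn_pair_insert:
  fixes x :: "'n::{finite,linorder}"
  assumes "x \<notin> A"
  shows "sgn_pair (insert x A) B = (-1) ^ cnt x B * sgn_pair A B"
proof -
  have e: "{(a,b). a \<in> insert x A \<and> b \<in> B \<and> b < a} =
     (Pair x) ` {y\<in>B. y<x} \<union> {(a,b). a \<in> A \<and> b \<in> B \<and> b < a}" by auto
  have d: "(Pair x) ` {y\<in>B. y<x} \<inter> {(a,b). a \<in> A \<and> b \<in> B \<and> b < a} = {}"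
    using assms by auto
  have "card {(a,b). a \<in> insert x A \<and> b \<in> B \<and> b < a} =
     card ((Pair x) ` {y\<in>B. y<x}) + card {(a,b). a \<in> A \<and> b \<in> B \<and> b < a}"
    unfolding e by (rule card_Un_disjoint) (use d in auto)
  also have "card ((Pair x) ` {y\<in>B. y<x}) = card {y\<in>B. y<x}"
    by (rule card_image) (auto simp: inj_on_def)
  finally show ?thesis unfolding sgn_pair_def cnt_def by (simp add: power_add)
qed

lemma vol_form_card: "vol_form S z = (if card S = CARD('n) then 1 else (0::complex))"
  for S :: "'n::{finite,linorder} set"
proof -
  have "(S = UNIV) = (card S = CARD('n))"
    using card_eq_UNIV_imp_eq_UNIV[of S] by auto
  then show ?thesis unfolding vol_form_def by simp
qed

lemma sum_Pow_insert:
  assumes "finite A" "x \<notin> A"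
  shows "(\<Sum>B\<in>Pow (insert x A). f B) = (\<Sum>B\<in>Pow A. f B) + (\<Sum>B\<in>Pow A. f (insert x B))"
proof -
  have "Pow (insert x A) = Pow A \<union> insert x ` Pow A" by (rule Pow_insert)
  moreover have "Pow A \<inter> insert x ` Pow A = {}" using assms by auto
  moreover have "inj_on (insert x) (Pow A)" using assms unfolding inj_on_def
    by (metis Diff_insert_absorb PowD subset_iff)
  ultimately show ?thesis using assms
    by (simp add: sum.union_disjoint sum.reindex)
qed

lemma interior_T: "interior X \<alpha> T = (\<lambda>z. \<Sum>i\<in>UNIV - T. sgn_pair {i} T * (X z)$i * \<alpha> (insert i T) z)"
  by (simp add: interior_def)
lemma ext_d_T: "ext_d \<alpha> S = (\<lambda>z. \<Sum>i\<in>S. sgn_pair {i} (S - {i}) * cpartial (\<alpha> (S - {i})) i z)"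
  by (simp add: ext_d_def)
lemma wedge_T: "wedge \<alpha> \<beta> S = (\<lambda>z. \<Sum>A\<in>Pow S. sgn_pair A (S - A) * \<alpha> A z * \<beta> (S - A) z)"
  by (simp add: wedge_def)

locale four =
  fixes a b c d :: "'n::{finite,linorder}"
  assumes ab: "a<b" and bc: "b<c" and cd: "c<d" and U: "UNIV = {a,b,c,d}"
begin
lemma ords: "a<b" "b<c" "c<d" "a<c" "a<d" "b<d"
  "a\<noteq>b" "a\<noteq>c" "a\<noteq>d" "b\<noteq>c" "b\<noteq>d" "c\<noteq>d"
  "b\<noteq>a" "c\<noteq>a" "d\<noteq>a" "c\<noteq>b" "d\<noteq>b" "d\<noteq>c"
  "\<not> b<a" "\<not> c<a" "\<not> d<a" "\<not> c<b" "\<not> d<b" "\<not> d<c"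
  "\<not> a<a" "\<not> b<b" "\<not> c<c" "\<not> d<d"
  using ab bc cd by auto
lemma card4: "CARD('n) = 4" using ords by (simp add: U)

lemmas comp = ords card4 U sgn_pair_insert cnt_insert vol_form_card insert_Diff_if
  interior_T ext_d_T wedge_T sum_Pow_insert

lemma test: "interior W vol_form {b,c,d} z = W z $ a"
  by (simp add: comp)
lemma test2: "interior V (interior W vol_form) {a,c} z = (V z $ b) * (W z $ d) - V z $ d * W z $ b"
  by (simp add: comp)
end


definition sh :: "complex^'n \<Rightarrow> 'n \<Rightarrow> complex \<Rightarrow> complex^'n" where
 "sh z i t = (\<chi> j. z$j + (if j = i then t else 0))"
lemma cpartial_sh: "cpartial f i z = deriv (\<lambda>t. f (sh z i t)) 0" by (simp add: cpartial_def sh_def)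
lemma sh0[simp]: "sh z i 0 = z" by (simp add: sh_def vec_eq_iff)
lemma sh_nth[simp]: "sh z i t $ k = z$k + (if k = i then t else 0)" by (simp add: sh_def)

definition cdz :: "(complex^'n \<Rightarrow> complex) \<Rightarrow> complex^'n \<Rightarrow> bool" where
 "cdz f z \<longleftrightarrow> (\<forall>i. (\<lambda>t. f (sh z i t)) field_differentiable (at 0))"

lemma cd_der: "cdz f z \<Longrightarrow> ((\<lambda>t. f (sh z i t)) has_field_derivative cpartial f i z) (at 0)"
  unfolding cdz_def cpartial_sh using field_differentiable_derivI by blast

lemma cpartial_eq: "((\<lambda>t. f (sh z i t)) has_field_derivative D) (at 0) \<Longrightarrow> cpartial f i z = D"
  by (simp add: cpartial_sh DERIV_imp_deriv)

lemma cdz_I: "(\<And>i. \<exists>D. ((\<lambda>t. f (sh z i t)) has_field_derivative D) (at 0)) \<Longrightarrow> cdz f z"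
  unfolding cdz_def field_differentiable_def by blast

lemma der_const: "((\<lambda>t. f (sh z i t)) has_field_derivative 0) (at 0)" if "\<And>z. f z = k" for k
  using that by (simp add: DERIV_const)

lemma cdz_const[simp]: "cdz (\<lambda>z. k) z" by (rule cdz_I) (auto intro: DERIV_const)
lemma cpartial_const[simp]: "cpartial (\<lambda>z. k) i z = 0" by (rule cpartial_eq) (simp add: DERIV_const)

lemma der_coord: "((\<lambda>t. sh z i t $ k) has_field_derivative (if k = i then 1 else 0)) (at 0)"
proof (cases "k = i")
  case True
  then show ?thesis by (simp, intro derivative_eq_intros) auto
next
  case False
  then show ?thesis by (simp add: DERIV_const)
qed
lemma cdz_coord[simp]: "cdz (\<lambda>z. z$k) z" using der_coord by (intro cdz_I) blast
lemma cpartial_coord[simp]: "cpartial (\<lambda>z. z$k) i z = (if k = i then 1 else 0)"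
  by (rule cpartial_eq) (rule der_coord)

lemma mv_sh: "(M *v sh z i t) $ k = (M *v z)$k + M$k$i * t"
proof -
  have "(M *v sh z i t) $ k = (\<Sum>j\<in>UNIV. M$k$j * z$j + M$k$j * (if j = i then t else 0))"
    by (simp add: matrix_vector_mult_def algebra_simps)
  also have "\<dots> = (M *v z)$k + (\<Sum>j\<in>UNIV. M$k$j * (if j = i then t else 0))"
    by (simp only: sum.distrib matrix_vector_mult_def vec_lambda_beta)
  also have "(\<Sum>j\<in>UNIV. M$k$j * (if j = i then t else 0)) = (\<Sum>j\<in>UNIV. if j = i then M$k$j * t else 0)"
    by (rule sum.cong) auto
  also have "\<dots> = M$k$i * t" by (simp add: sum.delta)
  finally show ?thesis .
qed
lemma der_mv: "((\<lambda>t. (M *v sh z i t) $ k) has_field_derivative M$k$i) (at 0)"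
  unfolding mv_sh by (intro derivative_eq_intros) auto
lemma cdz_mv[simp]: "cdz (\<lambda>z. (M *v z)$k) z" using der_mv by (intro cdz_I) blast
lemma cpartial_mv[simp]: "cpartial (\<lambda>z. (M *v z)$k) i z = M$k$i"
  by (rule cpartial_eq) (rule der_mv)

lemma cdz_add[simp]: "cdz f z \<Longrightarrow> cdz g z \<Longrightarrow> cdz (\<lambda>z. f z + g z) z"
  by (rule cdz_I) (rule exI, rule DERIV_add; erule cd_der)
lemma cpartial_add[simp]: "cdz f z \<Longrightarrow> cdz g z \<Longrightarrow>
   cpartial (\<lambda>z. f z + g z) i z = cpartial f i z + cpartial g i z"
  by (rule cpartial_eq) (rule DERIV_add; erule cd_der)
lemma cdz_diff[simp]: "cdz f z \<Longrightarrow> cdz g z \<Longrightarrow> cdz (\<lambda>z. f z - g z) z"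
  by (rule cdz_I) (rule exI, rule DERIV_diff; erule cd_der)
lemma cpartial_diff[simp]: "cdz f z \<Longrightarrow> cdz g z \<Longrightarrow>
   cpartial (\<lambda>z. f z - g z) i z = cpartial f i z - cpartial g i z"
  by (rule cpartial_eq) (rule DERIV_diff; erule cd_der)
lemma cdz_minus[simp]: "cdz f z \<Longrightarrow> cdz (\<lambda>z. - f z) z"
  by (rule cdz_I) (rule exI, rule DERIV_minus; erule cd_der)
lemma cpartial_minus[simp]: "cdz f z \<Longrightarrow>
   cpartial (\<lambda>z. - f z) i z = - cpartial f i z"
  by (rule cpartial_eq) (rule DERIV_minus; erule cd_der)
lemma cdz_mult[simp]: "cdz f z \<Longrightarrow> cdz g z \<Longrightarrow> cdz (\<lambda>z. f z * g z) z"
  by (rule cdz_I) (rule exI, rule DERIV_mult; erule cd_der)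
lemma cpartial_mult[simp]: "cdz f z \<Longrightarrow> cdz g z \<Longrightarrow>
   cpartial (\<lambda>z. f z * g z) i z = cpartial f i z * g z + f z * cpartial g i z"
proof -
  assume f: "cdz f z" and g: "cdz g z"
  have "((\<lambda>t. f (sh z i t) * g (sh z i t)) has_field_derivative
      cpartial f i z * g (sh z i 0) + cpartial g i z * f (sh z i 0)) (at 0)"
    by (rule DERIV_mult) (use f g cd_der in auto)
  then show ?thesis by (intro cpartial_eq) (simp add: mult.commute)
qed
lemma cdz_divide: "cdz f z \<Longrightarrow> cdz g z \<Longrightarrow> g z \<noteq> 0 \<Longrightarrow> cdz (\<lambda>z. f z / g z) z"
  by (rule cdz_I) (rule exI, rule DERIV_divide, erule cd_der, erule cd_der, simp)
lemma cpartial_divide: "cdz f z \<Longrightarrow> cdz g z \<Longrightarrow> g z \<noteq> 0 \<Longrightarrow>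
   cpartial (\<lambda>z. f z / g z) i z = (cpartial f i z * g z - cpartial g i z * f z) / (g z * g z)"
proof -
  assume f: "cdz f z" and g: "cdz g z" and n: "g z \<noteq> 0"
  have "((\<lambda>t. f (sh z i t) / g (sh z i t)) has_field_derivative
      (cpartial f i z * g (sh z i 0) - f (sh z i 0) * cpartial g i z) / (g (sh z i 0) * g (sh z i 0))) (at 0)"
    by (rule DERIV_divide) (use f g n cd_der in auto)
  then show ?thesis by (intro cpartial_eq) (simp add: mult.commute)
qed
lemma cdz_sum[simp]: "(\<And>j. j \<in> I \<Longrightarrow> cdz (f j) z) \<Longrightarrow> cdz (\<lambda>z. \<Sum>j\<in>I. f j z) z"
  by (rule cdz_I) (rule exI, rule DERIV_sum, rule cd_der, blast)
lemma cpartial_sum: "(\<And>j. j \<in> I \<Longrightarrow> cdz (f j) z) \<Longrightarrow>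
   cpartial (\<lambda>z. \<Sum>j\<in>I. f j z) i z = (\<Sum>j\<in>I. cpartial (f j) i z)"
  by (rule cpartial_eq) (rule DERIV_sum, rule cd_der, blast)

definition holp :: "(complex^'n \<Rightarrow> complex) \<Rightarrow> complex^'n \<Rightarrow> bool" where
 "holp f p \<longleftrightarrow> (\<exists>L. (f has_derivative L) (at p) \<and> (\<forall>c v. L (\<chi> j. c * v$j) = c * L v))"

lemma holp_const[simp]: "holp (\<lambda>z. k) p"
  unfolding holp_def by (intro exI[of _ "\<lambda>_. 0"]) auto
lemma holp_coord[simp]: "holp (\<lambda>z. z$k) p"
  unfolding holp_def by (intro exI[of _ "\<lambda>v. v$k"]) (auto intro: bounded_linear.has_derivative[OF bounded_linear_vec_nth] has_derivative_ident)
lemma holp_add[simp]: "holp f p \<Longrightarrow> holp g p \<Longrightarrow> holp (\<lambda>z. f z + g z) p"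
  unfolding holp_def
  apply (elim exE conjE)
  subgoal for L M by (intro exI[of _ "\<lambda>v. L v + M v"] conjI allI has_derivative_add) (auto simp: distrib_left)
  done
lemma holp_diff[simp]: "holp f p \<Longrightarrow> holp g p \<Longrightarrow> holp (\<lambda>z. f z - g z) p"
  unfolding holp_def
  apply (elim exE conjE)
  subgoal for L M by (intro exI[of _ "\<lambda>v. L v - M v"] conjI allI has_derivative_diff) (auto simp: right_diff_distrib)
  done
lemma holp_mult[simp]: "holp f p \<Longrightarrow> holp g p \<Longrightarrow> holp (\<lambda>z. f z * g z) p"
  unfolding holp_def
proof (elim exE conjE)
  fix L M assume f: "(f has_derivative L) (at p)" and g: "(g has_derivative M) (at p)"
   and l: "\<forall>c v. L (\<chi> j. c * v $ j) = c * L v" and m: "\<forall>c v. M (\<chi> j. c * v $ j) = c * M v"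
  show "\<exists>L. ((\<lambda>z. f z * g z) has_derivative L) (at p) \<and> (\<forall>c v. L (\<chi> j. c * v $ j) = c * L v)"
    by (intro exI conjI allI, rule has_derivative_mult[OF f g]) (simp only: l m, simp add: algebra_simps)
qed
lemma holp_divide: "holp f p \<Longrightarrow> holp g p \<Longrightarrow> g p \<noteq> 0 \<Longrightarrow> holp (\<lambda>z. f z / g z) p"
  unfolding holp_def
proof (elim exE conjE)
  fix L M assume f: "(f has_derivative L) (at p)" and g: "(g has_derivative M) (at p)"
   and l: "\<forall>c v. L (\<chi> j. c * v $ j) = c * L v" and m: "\<forall>c v. M (\<chi> j. c * v $ j) = c * M v"
   and n: "g p \<noteq> 0"
  show "\<exists>L. ((\<lambda>z. f z / g z) has_derivative L) (at p) \<and> (\<forall>c v. L (\<chi> j. c * v $ j) = c * L v)"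
    by (intro exI conjI allI, rule has_derivative_divide[OF f g n]) (simp only: l m, simp add: algebra_simps)
qed
lemma holp_sum[simp]: "(\<And>j. j \<in> I \<Longrightarrow> holp (f j) p) \<Longrightarrow> holp (\<lambda>z. \<Sum>j\<in>I. f j z) p"
proof (induction I rule: infinite_finite_induct)
  case (insert x F)
  then have "holp (\<lambda>z. f x z + (\<Sum>j\<in>F. f j z)) p" by (intro holp_add) auto
  then show ?case using insert by simp
qed auto
lemma holp_mv[simp]: "holp (\<lambda>z. (M *v z)$k) p"
  unfolding matrix_vector_mult_def by simp
lemma holp_minus[simp]: "holp f p \<Longrightarrow> holp (\<lambda>z. - f z) p"
  using holp_diff[of "\<lambda>_. 0" p f] by simp

lemma holp_cont: "holp f p \<Longrightarrow> isCont f p"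
  unfolding holp_def using has_derivative_continuous by blast



lemma form_deg_vol: "form_deg CARD('n) (vol_form :: ('n::{finite,linorder}) cform)"
  unfolding form_deg_def vol_form_def by auto

lemma form_deg_interior:
  fixes \<alpha> :: "('n::{finite,linorder}) cform"
  assumes "form_deg (Suc k) \<alpha>" shows "form_deg k (interior X \<alpha>)"
  unfolding form_deg_def
proof (intro allI impI)
  fix T :: "'n set" assume T: "card T \<noteq> k"
  have "\<And>i. i \<in> UNIV - T \<Longrightarrow> \<alpha> (insert i T) = (\<lambda>_. 0)"
    using assms T unfolding form_deg_def by (simp add: card_insert_if)
  then show "interior X \<alpha> T = (\<lambda>_. 0)" unfolding interior_T by (simp add: fun_eq_iff)
qed

lemma form_deg_ext_d:
  fixes \<alpha> :: "('n::{finite,linorder}) cform"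
  assumes "form_deg k \<alpha>" shows "form_deg (Suc k) (ext_d \<alpha>)"
  unfolding form_deg_def
proof (intro allI impI)
  fix S :: "'n set" assume S: "card S \<noteq> Suc k"
  have "\<And>i. i \<in> S \<Longrightarrow> \<alpha> (S - {i}) = (\<lambda>_. 0)"
  proof -
    fix i assume "i \<in> S"
    then have "card (S - {i}) = card S - 1" "card S \<ge> 1"
      by (auto simp: card_Diff_singleton Suc_leI card_gt_0_iff intro: Suc_leI)
    then have "card (S - {i}) \<noteq> k" using S by auto
    then show "\<alpha> (S - {i}) = (\<lambda>_. 0)" using assms unfolding form_deg_def by auto
  qed
  then show "ext_d \<alpha> S = (\<lambda>_. 0)" unfolding ext_d_T by (intro ext sum.neutral ballI) simp
qed

lemma form_deg_wedge:
  fixes \<alpha> \<beta> :: "('n::{finite,linorder}) cform"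
  assumes "form_deg k \<alpha>" "form_deg m \<beta>" shows "form_deg (k + m) (wedge \<alpha> \<beta>)"
  unfolding form_deg_def
proof (intro allI impI)
  fix S :: "'n set" assume S: "card S \<noteq> k + m"
  have "\<And>A. A \<in> Pow S \<Longrightarrow> \<alpha> A = (\<lambda>_. 0) \<or> \<beta> (S - A) = (\<lambda>_. 0)"
  proof -
    fix A assume "A \<in> Pow S"
    then have "card A + card (S - A) = card S"
      by (metis PowD card_Diff_subset card_mono diff_add_inverse finite le_add_diff_inverse finite_subset)
    then have "card A \<noteq> k \<or> card (S - A) \<noteq> m" using S by auto
    then show "\<alpha> A = (\<lambda>_. 0) \<or> \<beta> (S - A) = (\<lambda>_. 0)" using assms unfolding form_deg_def by auto
  qed
  then show "wedge \<alpha> \<beta> S = (\<lambda>_. 0)" unfolding wedge_T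
    by (auto simp: fun_eq_iff intro!: sum.neutral) (metis PowI)
qed

lemma form_deg_comb:
  assumes "form_deg k \<alpha>" "form_deg k \<beta>"
  shows "form_deg k (\<lambda>S z. \<alpha> S z + s * \<beta> S z)"
  using assms unfolding form_deg_def by (simp add: fun_eq_iff)

lemma form_eqI:
  assumes "form_deg k \<alpha>" "form_deg k \<beta>" "\<And>S z. card S = k \<Longrightarrow> \<alpha> S z = \<beta> S z"
  shows "\<alpha> = \<beta>"
proof (intro ext)
  fix S z show "\<alpha> S z = \<beta> S z"
    using assms unfolding form_deg_def by (cases "card S = k") (auto simp: fun_eq_iff)
qed

lemma ext_d_2:
  fixes \<alpha> :: "('n::{finite,linorder}) cform"
  assumes "p < q"
  shows "ext_d \<alpha> {p,q} z = cpartial (\<alpha> {q}) p z - cpartial (\<alpha> {p}) q z"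
  using assms less_imp_neq[OF assms] not_less_iff_gr_or_eq by (simp add: ext_d_def sgn_pair_insert cnt_insert insert_Diff_if)

lemma ext_d_3:
  fixes \<alpha> :: "('n::{finite,linorder}) cform"
  assumes "p < q" "q < r"
  shows "ext_d \<alpha> {p,q,r} z = cpartial (\<alpha> {q,r}) p z - cpartial (\<alpha> {p,r}) q z + cpartial (\<alpha> {p,q}) r z"
  using assms less_trans[OF assms] less_imp_neq[OF assms(1)] less_imp_neq[OF assms(2)] less_imp_neq[OF less_trans[OF assms]]
    not_less_iff_gr_or_eq by (simp add: ext_d_def sgn_pair_insert cnt_insert insert_Diff_if)

lemma wedge_11:
  fixes \<alpha> \<beta> :: "('n::{finite,linorder}) cform"
  assumes "p < q" "form_deg 1 \<alpha>" "form_deg 1 \<beta>"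
  shows "wedge \<alpha> \<beta> {p,q} z = \<alpha> {p} z * \<beta> {q} z - \<alpha> {q} z * \<beta> {p} z"
  using assms less_imp_neq[OF assms(1)] not_less_iff_gr_or_eq unfolding form_deg_def
  by (simp add: wedge_def sgn_pair_insert cnt_insert insert_Diff_if sum_Pow_insert card_insert_if Pow_empty)

lemma sgn_pair_empty2[simp]: "sgn_pair A {} = 1"
  unfolding sgn_pair_def by simp

lemma wedge_unit: fixes \<alpha> :: "('n::{finite,linorder}) cform" shows "wedge \<alpha> unit_form = \<alpha>"
proof (intro ext)
  fix S :: "'n set" and z
  have "wedge \<alpha> unit_form S z = (\<Sum>A\<in>Pow S. if A = S then \<alpha> A z else 0)"
    unfolding wedge_def unit_form_def
  proof (intro sum.cong refl)
    fix A assume "A \<in> Pow S"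
    then show "sgn_pair A (S - A) * \<alpha> A z * (if S - A = {} then 1 else 0) = (if A = S then \<alpha> A z else 0)"
      by auto
  qed
  also have "\<dots> = \<alpha> S z" by (simp add: sum.delta)
  finally show "wedge \<alpha> unit_form S z = \<alpha> S z" .
qed



definition tr :: "complex^('n::finite)^'n \<Rightarrow> complex" where "tr M = (\<Sum>i\<in>UNIV. M$i$i)"

definition Uf :: "complex^('n::finite)^'n \<Rightarrow> complex^'n^'n \<Rightarrow> complex^'n \<Rightarrow> complex^'n" where
 "Uf B A z = (\<chi> k. (\<Sum>j\<in>UNIV. A$k$j * (B *v z)$j) - (\<Sum>j\<in>UNIV. B$k$j * (A *v z)$j)
     + tr B * (A *v z)$k - tr A * (B *v z)$k)"

type_synonym 'n vf = "(complex,'n) vec \<Rightarrow> (complex,'n) vec"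
type_synonym 'n fm = "'n set \<Rightarrow> (complex,'n) vec \<Rightarrow> complex"

context four begin

lemma subsets16: "(S::'n set) = {} \<or> S = {a} \<or> S = {b} \<or> S = {c} \<or> S = {d} \<or> S = {a,b} \<or> S = {a,c} \<or> S = {a,d}
 \<or> S = {b,c} \<or> S = {b,d} \<or> S = {c,d} \<or> S = {a,b,c} \<or> S = {a,b,d} \<or> S = {a,c,d} \<or> S = {b,c,d} \<or> S = {a,b,c,d}"
proof -
  have S: "{x \<in> {a,b,c,d}. x \<in> S} = S" using U by auto
  then show ?thesis
    by (cases "a\<in>S"; cases "b\<in>S"; cases "c\<in>S"; cases "d\<in>S";
        simp only: filter_insert_set filter_empty_set if_True if_False simp_thms)
qed

lemma card1: "card (S::'n set) = 1 \<Longrightarrow> S = {a} \<or> S = {b} \<or> S = {c} \<or> S = {d}"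
  using subsets16[of S] by (elim disjE) (simp_all add: ords)
lemma card2: "card (S::'n set) = 2 \<Longrightarrow> S = {a,b} \<or> S = {a,c} \<or> S = {a,d} \<or> S = {b,c} \<or> S = {b,d} \<or> S = {c,d}"
  using subsets16[of S] by (elim disjE) (simp_all add: ords)
lemma card3: "card (S::'n set) = 3 \<Longrightarrow> S = {a,b,c} \<or> S = {a,b,d} \<or> S = {a,c,d} \<or> S = {b,c,d}"
  using subsets16[of S] by (elim disjE) (simp_all add: ords)
lemma card4': "card (S::'n set) = 4 \<Longrightarrow> S = {a,b,c,d}"
  using subsets16[of S] by (elim disjE) (simp_all add: ords)

lemma fd4: "form_deg 4 (vol_form :: 'n fm)" using form_deg_vol card4 by metis
lemma fd3: "form_deg 3 (interior (X::'n vf) vol_form)" using form_deg_interior[of 3 vol_form X] fd4 by simp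
lemma fd2: "form_deg 2 (interior (Y::'n vf) (interior X vol_form))" using form_deg_interior[of 2 _ Y] fd3 by simp
lemma fd1: "form_deg 1 (interior (Z::'n vf) (interior Y (interior X vol_form)))" using form_deg_interior[of 1 _ Z] fd2 by (simp add: numeral_2_eq_2)

lemma fdd1: "form_deg 1 (\<alpha>::'n fm) \<Longrightarrow> form_deg 2 (ext_d \<alpha>)"
  using form_deg_ext_d[of 1 \<alpha>] by (simp add: numeral_2_eq_2)
lemma fdd2: "form_deg 2 (\<alpha>::'n fm) \<Longrightarrow> form_deg 3 (ext_d \<alpha>)"
  using form_deg_ext_d[of 2 \<alpha>] by (simp add: numeral_3_eq_3 numeral_2_eq_2)

lemmas comp2 = ords card4 U sgn_pair_insert cnt_insert vol_form_card insert_Diff_if interior_T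

lemma wedge22:
  fixes \<alpha> \<beta> :: "'n fm"
  assumes "form_deg 2 \<alpha>" "form_deg 2 \<beta>"
  shows "wedge \<alpha> \<beta> {a,b,c,d} z = \<alpha> {a,b} z * \<beta> {c,d} z - \<alpha> {a,c} z * \<beta> {b,d} z
    + \<alpha> {a,d} z * \<beta> {b,c} z + \<alpha> {b,c} z * \<beta> {a,d} z - \<alpha> {b,d} z * \<beta> {a,c} z
    + \<alpha> {c,d} z * \<beta> {a,b} z"
  using assms unfolding form_deg_def
  by (simp add: comp card_insert_if)

lemma I1: fixes A B :: "((complex,'n) vec, 'n) vec" shows "ext_d (interior (\<lambda>z. B *v z) (interior (\<lambda>z. A *v z) vol_form)) =
   interior (Uf B A) vol_form"
  apply (rule form_eqI[of 3])
    apply (rule fdd2, rule fd2)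
   apply (rule fd3)
  subgoal premises p for S z
    using card3[OF p]
    apply (elim disjE; simp add: comp Uf_def tr_def)
       apply (simp_all add: algebra_simps)
    done
  done

end


definition det3 :: "('n \<Rightarrow> complex) \<Rightarrow> ('n \<Rightarrow> complex) \<Rightarrow> ('n \<Rightarrow> complex) \<Rightarrow> 'n \<Rightarrow> 'n \<Rightarrow> 'n \<Rightarrow> complex" where
 "det3 p q r i j k = p i*(q j*r k - q k*r j) - p j*(q i * r k - q k * r i) + p k*(q i*r j - q j*r i)"

lemma form_deg_lin:
  assumes "form_deg k \<alpha>" "form_deg k \<beta>"
  shows "form_deg k (\<lambda>S z. p * \<alpha> S z + q * \<beta> S z)"
  using assms unfolding form_deg_def by (simp add: fun_eq_iff)

lemma form_deg_zero: "form_deg k (\<lambda>S z. 0)"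
  unfolding form_deg_def by simp

context four begin

lemma I2: fixes A B :: "((complex,'n) vec, 'n) vec" shows
  "ext_d (interior (\<lambda>z. z) (interior (\<lambda>z. B *v z) (interior (\<lambda>z. A *v z) vol_form))) =
   (\<lambda>S z. 4 * interior (\<lambda>z. B *v z) (interior (\<lambda>z. A *v z) vol_form) S z +
     (-1) * interior (\<lambda>z. z) (interior (Uf B A) vol_form) S z)"
  apply (rule form_eqI[of 2])
    apply (rule fdd1, rule fd1)
   apply (rule form_deg_lin, rule fd2, rule fd2)
  subgoal premises p for S z
    using card2[OF p]
    apply (elim disjE; simp add: comp2 ext_d_2 Uf_def tr_def)
         apply (simp_all add: U matrix_vector_mult_def ords algebra_simps)
    done
  done

abbreviation "uu A B z \<equiv> (\<lambda>k. (\<Sum>j\<in>UNIV. B$k$j * (A *v z)$j) - (\<Sum>j\<in>UNIV. A$k$j * (B *v z)$j))"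

lemma I3: fixes A B :: "((complex,'n) vec, 'n) vec" shows
 "wedge (ext_d (interior (\<lambda>_. axis x 1) (interior (\<lambda>z. B *v z) (interior (\<lambda>z. A *v z) vol_form))))
    (interior (\<lambda>z. B *v z) (interior (\<lambda>z. A *v z) vol_form)) {a,b,c,d} z =
  (if x = a then - det3 (\<lambda>k. (A *v z)$k) (\<lambda>k. (B *v z)$k) (uu A B z) b c d
   else if x = b then det3 (\<lambda>k. (A *v z)$k) (\<lambda>k. (B *v z)$k) (uu A B z) a c d
   else if x = c then - det3 (\<lambda>k. (A *v z)$k) (\<lambda>k. (B *v z)$k) (uu A B z) a b d
   else det3 (\<lambda>k. (A *v z)$k) (\<lambda>k. (B *v z)$k) (uu A B z) a b c)"
  apply (subst wedge22)
    apply (rule fdd1, rule fd1)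
   apply (rule fd2)
  using U apply (subgoal_tac "x = a \<or> x = b \<or> x = c \<or> x = d")
   apply (elim disjE; simp add: comp2 ext_d_2 axis_def det3_def)
      apply (simp_all add: algebra_simps)
  by auto

lemma P1: fixes V W :: "'n vf" shows
  "wedge (interior V (interior W vol_form)) (interior V (interior W vol_form)) = (\<lambda>S z. 0)"
  apply (rule form_eqI[of 4])
    apply (rule form_deg_wedge[of 2 _ 2, simplified], rule fd2, rule fd2)
   apply (rule form_deg_zero)
  subgoal premises p for S z
    using card4'[OF p]
    apply (simp add: wedge22 fd2)
    apply (simp add: comp2 algebra_simps)
    done
  done

lemma P2: fixes V W :: "'n vf" shows
  "interior W (interior V (interior W vol_form)) = (\<lambda>S z. 0)"
  apply (rule form_eqI[of 1])
    apply (rule fd1)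
   apply (rule form_deg_zero)
  subgoal premises p for S z
    using card1[OF p]
    apply (elim disjE; simp add: comp2)
       apply (simp_all add: algebra_simps)
    done
  done

lemma pairs6: "x < y \<Longrightarrow> (x = a \<and> y = b) \<or> (x = a \<and> y = c) \<or> (x = a \<and> y = d) \<or> (x = b \<and> y = c) \<or> (x = b \<and> y = d) \<or> (x = c \<and> y = d)"
proof -
  assume xy: "x < y"
  have "x \<in> {a,b,c,d}" "y \<in> {a,b,c,d}" using U by auto
  then show ?thesis using xy ords by auto
qed

lemma P3: fixes V W :: "'n vf" assumes xy: "x < y" and S: "card S = 2" shows
  "wedge (interior (\<lambda>_. axis x 1) (interior V (interior W vol_form)))
         (interior (\<lambda>_. axis y 1) (interior V (interior W vol_form))) S z =
   interior V (interior W vol_form) {x,y} z * interior V (interior W vol_form) S z"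
  using pairs6[OF xy] card2[OF S]
  apply (elim disjE conjE)
  apply (simp_all add: wedge_11[OF _ fd1 fd1] ords)
  apply (simp_all add: comp2 axis_def algebra_simps)
  done

lemma form_deg_div: "form_deg k \<alpha> \<Longrightarrow> form_deg k (\<lambda>S z. \<alpha> S z / g z)"
  unfolding form_deg_def by (simp add: fun_eq_iff)

definition g0 :: "((complex,'n) vec \<Rightarrow> complex) \<Rightarrow> 'n fm" where
  "g0 g = (\<lambda>S. if S = {} then g else (\<lambda>_. 0))"

lemma fd_g0: "form_deg 0 (g0 g)" unfolding form_deg_def g0_def by auto
lemma fd_dg0: "form_deg 1 (ext_d (g0 g))" using form_deg_ext_d[OF fd_g0] by simp
lemma dg0: "ext_d (g0 g) {p} z = cpartial g p z"
  by (simp add: ext_d_T g0_def)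

lemma Q: fixes \<alpha> :: "'n fm"
  assumes "form_deg 1 \<alpha>" "form_deg 2 \<eta>" "g z \<noteq> 0" "cdz g z" "\<And>q. cdz (\<alpha> {q}) z"
  shows "wedge (ext_d (\<lambda>S z. \<alpha> S z / g z)) \<eta> {a,b,c,d} z =
     wedge (ext_d \<alpha>) \<eta> {a,b,c,d} z / g z - wedge (wedge (ext_d (g0 g)) \<alpha>) \<eta> {a,b,c,d} z / (g z * g z)"
proof -
  have f1: "form_deg 2 (ext_d (\<lambda>S z. \<alpha> S z / g z))" by (rule fdd1, rule form_deg_div, rule assms(1))
  have f2: "form_deg 2 (ext_d \<alpha>)" by (rule fdd1, rule assms(1))
  have f3: "form_deg 2 (wedge (ext_d (g0 g)) \<alpha>)"
    using form_deg_wedge[OF fd_dg0 assms(1)] by (simp add: numeral_2_eq_2)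
  show ?thesis
    apply (simp only: wedge22[OF f1 assms(2)] wedge22[OF f2 assms(2)] wedge22[OF f3 assms(2)])
    apply (simp add: ext_d_2 ords wedge_11[OF _ fd_dg0 assms(1)] dg0 cpartial_divide assms)
    using assms(3) apply (simp add: field_simps)
    done
qed

lemma P5: fixes V W :: "'n vf" and \<gamma> :: "'n fm" assumes "form_deg 1 \<gamma>" shows
  "wedge (wedge \<gamma> (interior (\<lambda>_. axis y 1) (interior V (interior W vol_form)))) (interior V (interior W vol_form)) {a,b,c,d} z = 0"
proof -
  have f: "form_deg 2 (wedge \<gamma> (interior (\<lambda>_. axis y 1) (interior V (interior W vol_form))))"
    using form_deg_wedge[OF assms fd1] by (simp add: numeral_2_eq_2)
  have "y = a \<or> y = b \<or> y = c \<or> y = d" using U by auto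
  then show ?thesis
    apply (simp only: wedge22[OF f fd2])
    apply (elim disjE; simp add: wedge_11[OF _ assms fd1] ords)
       apply (simp_all add: comp2 axis_def algebra_simps)
    done
qed

end


lemma cpartial_quad:
  fixes q :: "'n::finite \<Rightarrow> 'n \<Rightarrow> complex"
  shows "cpartial (\<lambda>z. \<Sum>k\<in>UNIV. \<Sum>l\<in>UNIV. q k l * z$k * z$l) i z = (\<Sum>k\<in>UNIV. (q i k + q k i) * z$k)"
proof -
  have "cpartial (\<lambda>z. \<Sum>k\<in>UNIV. \<Sum>l\<in>UNIV. q k l * z$k * z$l) i z =
     (\<Sum>k\<in>UNIV. \<Sum>l\<in>UNIV. q k l * (if k = i then 1 else 0) * z$l + q k l * z$k * (if l = i then 1 else 0))"
    by (simp add: cpartial_sum)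
  also have "\<dots> = (\<Sum>k\<in>UNIV. \<Sum>l\<in>UNIV. (if k = i then q k l * z$l else 0) + (if l = i then q k l * z$k else 0))"
    by (intro sum.cong refl) auto
  also have "\<dots> = (\<Sum>l\<in>UNIV. q i l * z$l) + (\<Sum>k\<in>UNIV. q k i * z$k)"
  proof -
    have aux: "\<And>k. (\<Sum>l\<in>UNIV. if k = i then q k l * z$l else 0) = (if k = i then \<Sum>l\<in>UNIV. q k l * z$l else 0)"
      by auto
    show ?thesis by (simp add: sum.distrib aux sum.delta)
  qed
  also have "\<dots> = (\<Sum>k\<in>UNIV. (q i k + q k i) * z$k)"
    by (simp add: sum.distrib algebra_simps)
  finally show ?thesis .
qed

lemma sgn_sq: "sgn_pair A B * sgn_pair A B = 1"
  unfolding sgn_pair_def by (simp only: power_mult_distrib[symmetric]) simp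

lemma X_lin:
  fixes \<eta> :: "('n::{finite,linorder}) cform" and X :: "(complex,'n) vec \<Rightarrow> (complex,'n) vec"
  assumes h: "homog_deg2_form \<eta>" and e: "ext_d \<eta> = interior X vol_form"
  shows "\<exists>A. X = (\<lambda>z. A *v z)"
proof -
  have "\<forall>S. \<exists>a. \<forall>z. \<eta> S z = (\<Sum>k\<in>UNIV. \<Sum>l\<in>UNIV. a k l * z$k * z$l)"
    using h unfolding homog_deg2_form_def .
  from choice[OF this] obtain q where q0: "\<forall>S z. \<eta> S z = (\<Sum>k\<in>UNIV. \<Sum>l\<in>UNIV. q S k l * z$k * z$l)"
    by blast
  then have q: "\<And>S z. \<eta> S z = (\<Sum>k\<in>UNIV. \<Sum>l\<in>UNIV. q S k l * z$k * z$l)" by blast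
  have qf: "\<eta> S = (\<lambda>z. \<Sum>k\<in>UNIV. \<Sum>l\<in>UNIV. q S k l * z$k * z$l)" for S
    using q by auto
  define C where "C i k = sgn_pair {i} (UNIV - {i}) *
     (\<Sum>j\<in>UNIV - {i}. sgn_pair {j} (UNIV - {i} - {j}) * (q (UNIV - {i} - {j}) j k + q (UNIV - {i} - {j}) k j))" for i k
  have "X z $ i = (\<Sum>k\<in>UNIV. C i k * z$k)" for z i
  proof -
    have iv: "interior X vol_form (UNIV - {i}) z = sgn_pair {i} (UNIV - {i}) * X z $ i"
    proof -
      have "UNIV - (UNIV - {i}) = {i}" by auto
      then show ?thesis unfolding interior_def vol_form_def by (simp add: insert_absorb)
    qed
    have ed: "ext_d \<eta> (UNIV - {i}) z = (\<Sum>j\<in>UNIV - {i}. sgn_pair {j} (UNIV - {i} - {j}) *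
        (\<Sum>k\<in>UNIV. (q (UNIV - {i} - {j}) j k + q (UNIV - {i} - {j}) k j) * z$k))"
      unfolding ext_d_def qf cpartial_quad by simp
    have "X z $ i = sgn_pair {i} (UNIV - {i}) * ext_d \<eta> (UNIV - {i}) z"
      using iv e sgn_sq[of "{i}" "UNIV - {i}"] by (simp add: mult.assoc[symmetric])
    also have "\<dots> = (\<Sum>j\<in>UNIV - {i}. \<Sum>k\<in>UNIV. sgn_pair {i} (UNIV - {i}) * sgn_pair {j} (UNIV - {i} - {j}) *
        (q (UNIV - {i} - {j}) j k + q (UNIV - {i} - {j}) k j) * z$k)"
      unfolding ed by (simp add: sum_distrib_left mult.assoc)
    also have "\<dots> = (\<Sum>k\<in>UNIV. \<Sum>j\<in>UNIV - {i}. sgn_pair {i} (UNIV - {i}) * sgn_pair {j} (UNIV - {i} - {j}) *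
        (q (UNIV - {i} - {j}) j k + q (UNIV - {i} - {j}) k j) * z$k)"
      by (rule sum.swap)
    also have "\<dots> = (\<Sum>k\<in>UNIV. C i k * z$k)"
      unfolding C_def by (simp add: sum_distrib_left sum_distrib_right mult_ac)
    finally show ?thesis .
  qed
  then have "X = (\<lambda>z. (\<chi> i k. C i k) *v z)"
    by (auto simp: fun_eq_iff vec_eq_iff matrix_vector_mult_def)
  then show ?thesis by blast
qed

lemma Y_lin: "linear_vf Y \<Longrightarrow> \<exists>B. Y = (\<lambda>z. B *v z)"
  unfolding linear_vf_def
proof (elim exE)
  fix B assume "\<forall>z i. Y z $ i = (\<Sum>k\<in>UNIV. B i k * z $ k)"
  then have "Y = (\<lambda>z. (\<chi> i k. B i k) *v z)"
    by (auto simp: fun_eq_iff vec_eq_iff matrix_vector_mult_def)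
  then show "\<exists>B. Y = (\<lambda>z. B *v z)" by blast
qed

lemma four_4: "\<exists>a b c d::4. four a b c d"
proof -
  obtain xs :: "4 list" where xs: "sorted_wrt (<) xs" "set xs = UNIV"
    using ex1_sorted_list_for_set_if_finite[of "UNIV :: 4 set"] by auto
  have "distinct xs" using xs(1) strict_sorted_iff by blast
  then have "length xs = 4" using xs(2) distinct_card by fastforce
  then have "xs = [xs!0, xs!1, xs!2, xs!3]"
    by (intro nth_equalityI) (auto simp: less_Suc_eq numeral_eq_Suc)
  then obtain a b c d where "xs = [a,b,c,d]" by blast
  then have "four a b c d" using xs unfolding four_def by auto
  then show ?thesis by blast
qed



lemma iv_gen: "interior X vol_form (UNIV - {i}) z = sgn_pair {i} (UNIV - {i}) * X z $ i"
  for X :: "(complex,'n::{finite,linorder}) vec \<Rightarrow> (complex,'n) vec"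
proof -
  have "UNIV - (UNIV - {i}) = {i}" by auto
  then show ?thesis unfolding interior_def vol_form_def by (simp add: insert_absorb)
qed

lemma interior_inj:
  fixes X Y :: "(complex,'n::{finite,linorder}) vec \<Rightarrow> (complex,'n) vec"
  assumes "interior X vol_form = interior Y vol_form" shows "X = Y"
proof (intro ext)
  fix z show "X z = Y z"
  proof (subst vec_eq_iff, intro allI)
    fix i
    have "sgn_pair {i} (UNIV - {i}) * X z $ i = sgn_pair {i} (UNIV - {i}) * Y z $ i"
      using assms iv_gen[of X i z] iv_gen[of Y i z] by metis
    then have "sgn_pair {i} (UNIV - {i}) * (sgn_pair {i} (UNIV - {i}) * X z $ i) =
       sgn_pair {i} (UNIV - {i}) * (sgn_pair {i} (UNIV - {i}) * Y z $ i)" by simp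
    then show "X z $ i = Y z $ i" by (simp add: mult.assoc[symmetric] sgn_sq)
  qed
qed

lemma trA0:
  fixes A B :: "((complex,'n::finite) vec, 'n) vec"
  assumes R: "\<And>z. Uf B A z = A *v z"
  shows "tr A = 0"
proof -
  have e: "(\<Sum>j\<in>UNIV. A$i$j * B$j$i) - (\<Sum>j\<in>UNIV. B$i$j * A$j$i) + tr B * A$i$i - tr A * B$i$i = A$i$i" for i
    using R[of "axis i 1"] unfolding vec_eq_iff Uf_def
    by (auto simp: matrix_vector_mult_def axis_def if_distrib sum.delta cong: if_cong)
  have s1: "(\<Sum>i\<in>UNIV. (\<Sum>j\<in>UNIV. A$i$j * B$j$i) - (\<Sum>j\<in>UNIV. B$i$j * A$j$i) + tr B * A$i$i - tr A * B$i$i)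
     = (\<Sum>i\<in>UNIV. A$i$i)"
    by (rule sum.cong[OF refl e])
  have "tr A = (\<Sum>i\<in>UNIV. (\<Sum>j\<in>UNIV. A$i$j * B$j$i) - (\<Sum>j\<in>UNIV. B$i$j * A$j$i) + tr B * A$i$i - tr A * B$i$i)"
    unfolding s1 by (simp add: tr_def)
  also have "\<dots> = (\<Sum>i\<in>UNIV. \<Sum>j\<in>UNIV. A$i$j * B$j$i) - (\<Sum>i\<in>UNIV. \<Sum>j\<in>UNIV. B$i$j * A$j$i)
      + tr B * tr A - tr A * tr B"
    by (simp add: sum.distrib sum_subtractf sum_distrib_left tr_def)
  also have "(\<Sum>i\<in>UNIV. \<Sum>j\<in>UNIV. B$i$j * A$j$i) = (\<Sum>i\<in>UNIV. \<Sum>j\<in>UNIV. A$i$j * B$j$i)"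
    by (subst sum.swap) (simp add: mult.commute)
  finally show ?thesis by simp
qed

definition Bs :: "complex \<Rightarrow> ((complex,'n::finite) vec, 'n) vec \<Rightarrow> ((complex,'n) vec, 'n) vec" where
  "Bs s B = (\<chi> i j. (1 + 4 * s) * B$i$j - s * (if i = j then 1 else 0))"

lemma Bs_mv: "Bs s B *v z = (1 + 4 * s) *s (B *v z) - s *s z"
proof -
  have "(Bs s B *v z) $ i = ((1 + 4 * s) *s (B *v z) - s *s z) $ i" for i
  proof -
    have "(Bs s B *v z) $ i = (\<Sum>j\<in>UNIV. (1 + 4 * s) * (B$i$j * z$j) - (if i = j then s * z$j else 0))"
      unfolding matrix_vector_mult_def by (simp, intro sum.cong) (auto simp: Bs_def algebra_simps)
    also have "\<dots> = (1 + 4 * s) * (B *v z)$i - s * z$i"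
      by (simp add: sum_subtractf sum_distrib_left matrix_vector_mult_def sum.delta)
    finally show ?thesis by (simp add: algebra_simps)
  qed
  then show ?thesis by (simp add: vec_eq_iff)
qed

lemma sumA_Bs: "(\<Sum>j\<in>UNIV. A$k$j * (Bs s B *v z)$j) = (1 + 4 * s) * (\<Sum>j\<in>UNIV. A$k$j * (B *v z)$j) - s * (A *v z)$k"
proof -
  have mA: "(A *v z)$k = (\<Sum>j\<in>UNIV. A$k$j * z$j)" by (simp add: matrix_vector_mult_def)
  have "(\<Sum>j\<in>UNIV. A$k$j * (Bs s B *v z)$j) = (\<Sum>j\<in>UNIV. (1 + 4 * s) * (A$k$j * (B *v z)$j) - s * (A$k$j * z$j))"
    by (intro sum.cong) (auto simp: Bs_mv algebra_simps)
  then show ?thesis by (simp only: sum_subtractf sum_distrib_left mA)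
qed

lemma sumBs_A: "(\<Sum>j\<in>UNIV. Bs s B$k$j * (A *v z)$j) = (1 + 4 * s) * (\<Sum>j\<in>UNIV. B$k$j * (A *v z)$j) - s * (A *v z)$k"
proof -
  have "(\<Sum>j\<in>UNIV. Bs s B$k$j * (A *v z)$j) = (\<Sum>j\<in>UNIV. (1 + 4 * s) * (B$k$j * (A *v z)$j) - (if k = j then s * (A *v z)$j else 0))"
    by (intro sum.cong) (auto simp: Bs_def algebra_simps)
  then show ?thesis by (simp add: sum_subtractf sum_distrib_left sum.delta)
qed

lemma tr_Bs: "tr (Bs s B) = (1 + 4 * s) * tr B - s * of_nat CARD('n)" for B :: "((complex,'n::finite) vec, 'n) vec"
  unfolding Bs_def tr_def by (simp add: sum_subtractf sum_distrib_left)

lemma interior_lin: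
  "interior (\<lambda>z. p *s V z - q *s W z) \<alpha> T z = p * interior V \<alpha> T z - q * interior W \<alpha> T z"
  unfolding interior_def by (simp add: sum_distrib_left sum_subtractf algebra_simps)



lemma holo_on_holp: "(\<And>p. p \<in> V \<Longrightarrow> holp f p) \<Longrightarrow> holo_on f V"
  unfolding holo_on_def holp_def by blast

lemma wedge_div: "wedge (\<lambda>S z. \<alpha> S z / g z) \<beta> S z = wedge \<alpha> \<beta> S z / g z"
  unfolding wedge_def by (simp add: sum_divide_distrib)

lemma hol_eta2: "holp (interior (\<lambda>z. B *v z) (interior (\<lambda>z. A *v z) vol_form) S) p"
  unfolding interior_T vol_form_def by simp
lemma hol_eta1: "holp (interior (\<lambda>_. e) (interior (\<lambda>z. B *v z) (interior (\<lambda>z. A *v z) vol_form)) S) p"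
  unfolding interior_T vol_form_def by simp
lemma cdz_eta2: "cdz (interior (\<lambda>z. B *v z) (interior (\<lambda>z. A *v z) vol_form) S) p"
  unfolding interior_T vol_form_def by simp
lemma cdz_eta1: "cdz (interior (\<lambda>_. e) (interior (\<lambda>z. B *v z) (interior (\<lambda>z. A *v z) vol_form)) S) p"
  unfolding interior_T vol_form_def by simp

context four begin

lemma Rk: assumes R: "\<And>z. Uf B A z = A *v z"
  shows "(\<Sum>j\<in>UNIV. A$k$j * (B*v z)$j) - (\<Sum>j\<in>UNIV. B$k$j * (A*v z)$j) + tr B * (A *v z)$k - tr A * (B *v z)$k = (A*v z)$k"
  using R[of z] by (simp add: vec_eq_iff Uf_def)

lemma Uf_Bs: fixes A B :: "((complex,'n) vec, 'n) vec"
  assumes R: "\<And>z. Uf B A z = A *v z" and t: "tr A = 0" shows "Uf (Bs s B) A z = A *v z"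
proof (subst vec_eq_iff, intro allI)
  fix k
  have r: "(\<Sum>j\<in>UNIV. A$k$j * (B*v z)$j) = (A*v z)$k + (\<Sum>j\<in>UNIV. B$k$j * (A*v z)$j) - tr B * (A *v z)$k"
    using Rk[OF R, of k z] t by (simp add: algebra_simps)
  show "Uf (Bs s B) A z $ k = (A *v z) $ k"
    apply (simp only: Uf_def vec_lambda_beta sumA_Bs sumBs_A tr_Bs card4 t r)
    apply (simp add: algebra_simps)
    done
qed

lemma uu_Bs: fixes A B :: "((complex,'n) vec, 'n) vec"
  assumes R: "\<And>z. Uf B A z = A *v z" and t: "tr A = 0"
  shows "uu A (Bs s B) z = (\<lambda>k. ((1 + 4 * s) * (tr B - 1)) * (A *v z)$k)"
proof
  fix k
  have r: "(\<Sum>j\<in>UNIV. A$k$j * (B*v z)$j) = (A*v z)$k + (\<Sum>j\<in>UNIV. B$k$j * (A*v z)$j) - tr B * (A *v z)$k"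
    using Rk[OF R, of k z] t by (simp add: algebra_simps)
  show "uu A (Bs s B) z k = ((1 + 4 * s) * (tr B - 1)) * (A *v z)$k"
    apply (simp only: sumA_Bs sumBs_A r)
    apply (simp add: algebra_simps)
    done
qed

lemma I3zero: fixes A B :: "((complex,'n) vec, 'n) vec"
  assumes C: "\<And>z. uu A B z = (\<lambda>k. cc * (A *v z)$k)"
  shows "wedge (ext_d (interior (\<lambda>_. axis x 1) (interior (\<lambda>z. B *v z) (interior (\<lambda>z. A *v z) vol_form))))
    (interior (\<lambda>z. B *v z) (interior (\<lambda>z. A *v z) vol_form)) {a,b,c,d} z = 0"
  unfolding I3 C by (simp add: det3_def algebra_simps)

end


context four begin

lemma integ: fixes A B :: "((complex,'n) vec, 'n) vec"
  assumes C: "\<And>z. uu A B z = (\<lambda>k. cc * (A *v z)$k)"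
  shows "integrable_form 2 (interior (\<lambda>z. B *v z) (interior (\<lambda>z. A *v z) vol_form))"
    (is "integrable_form 2 ?\<eta>")
  unfolding integrable_form_def
proof (intro allI impI)
  fix p assume "p \<notin> zero_set ?\<eta>"
  then obtain S where Sp: "?\<eta> S p \<noteq> 0" unfolding zero_set_def by auto
  have f2: "form_deg 2 ?\<eta>" by (rule fd2)
  have cS: "card S = 2"
  proof (rule ccontr)
    assume "card S \<noteq> 2" then have "?\<eta> S = (\<lambda>_. 0)" using f2 unfolding form_deg_def by blast
    then show False using Sp by simp
  qed
  obtain x y where xy: "x < y" "S = {x,y}"
  proof -
    from cS obtain x y where "S = {x,y}" "x \<noteq> y" by (auto simp: card_2_iff)
    then show thesis using that by (cases "x < y") (auto simp: insert_commute neq_iff)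
  qed
  define g where "g = ?\<eta> {x,y}"
  define \<alpha>x where "\<alpha>x = interior (\<lambda>_. axis x 1) ?\<eta>"
  define \<alpha>y where "\<alpha>y = interior (\<lambda>_. axis y 1) ?\<eta>"
  define V where "V = {z. g z \<noteq> 0}"
  define \<omega>1 where "\<omega>1 = (\<lambda>S z. \<alpha>x S z / g z)"
  have gp: "g p \<noteq> 0" using Sp xy g_def by simp
  have hg: "holp g q" for q unfolding g_def by (rule hol_eta2)
  have oV: "open V"
  proof -
    have "continuous_on UNIV g" using hg holp_cont by (intro continuous_at_imp_continuous_on) blast
    then have "open {z. g z \<noteq> (\<lambda>_. 0) z}" by (rule open_Collect_neq) (rule continuous_on_const)
    then show ?thesis unfolding V_def by simp
  qed
  have fx: "form_deg 1 \<alpha>x" unfolding \<alpha>x_def by (rule fd1)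
  have fy: "form_deg 1 \<alpha>y" unfolding \<alpha>y_def by (rule fd1)
  have f1: "form_deg 1 \<omega>1" unfolding \<omega>1_def by (rule form_deg_div, rule fx)
  have h1: "holo_form_on \<omega>1 V"
    unfolding holo_form_on_def
  proof
    fix T show "holo_on (\<omega>1 T) V"
    proof (rule holo_on_holp)
      fix q assume "q \<in> V"
      then have "g q \<noteq> 0" unfolding V_def by simp
      then have "holp (\<lambda>z. \<alpha>x T z / g z) q"
        by (intro holp_divide hg) (unfold \<alpha>x_def, rule hol_eta1)
      then show "holp (\<omega>1 T) q" unfolding \<omega>1_def by simp
    qed
  qed
  have h2: "holo_form_on \<alpha>y V"
    unfolding holo_form_on_def \<alpha>y_def by (intro allI holo_on_holp hol_eta1)
  have wl: "wedge_list [\<omega>1, \<alpha>y] = wedge \<omega>1 \<alpha>y" by (simp add: wedge_unit)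
  have dec: "?\<eta> T z = wedge_list [\<omega>1, \<alpha>y] T z" if "z \<in> V" for T z
  proof -
    have gz: "g z \<noteq> 0" using that unfolding V_def by simp
    have e1: "wedge_list [\<omega>1, \<alpha>y] T z = wedge \<alpha>x \<alpha>y T z / g z"
      by (subst wl) (simp only: \<omega>1_def wedge_div)
    show ?thesis
    proof (cases "card T = 2")
      case True
      then have "wedge \<alpha>x \<alpha>y T z = g z * ?\<eta> T z"
        unfolding \<alpha>x_def \<alpha>y_def g_def by (rule P3[OF xy(1)])
      then show ?thesis using e1 gz by simp
    next
      case False
      have fw: "form_deg 2 (wedge \<alpha>x \<alpha>y)" using form_deg_wedge[OF fx fy] by (simp add: numeral_2_eq_2)
      then have "wedge \<alpha>x \<alpha>y T = (\<lambda>_. 0)" using False unfolding form_deg_def by blast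
      moreover have "?\<eta> T = (\<lambda>_. 0)" using False f2 unfolding form_deg_def by blast
      ultimately show ?thesis using e1 by simp
    qed
  qed
  have int: "wedge (ext_d \<omega>) ?\<eta> T z = 0" if "\<omega> \<in> {\<omega>1, \<alpha>y}" "z \<in> V" for \<omega> T z
  proof -
    have gz: "g z \<noteq> 0" using that unfolding V_def by simp
    have fo: "form_deg 1 \<omega>" using that f1 fy by auto
    have f4: "form_deg 4 (wedge (ext_d \<omega>) ?\<eta>)"
      using form_deg_wedge[OF fdd1[OF fo] f2] by simp
    show ?thesis
    proof (cases "card T = 4")
      case False
      then show ?thesis using f4 unfolding form_deg_def by auto
    next
      case True
      then have T: "T = {a,b,c,d}" by (rule card4')
      show ?thesis
      proof (cases "\<omega> = \<alpha>y")
        case True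
        show ?thesis unfolding True T \<alpha>y_def by (rule I3zero, rule C)
      next
        case False
        then have o1: "\<omega> = \<omega>1" using that by auto
        have "wedge (ext_d \<omega>1) ?\<eta> {a,b,c,d} z =
           wedge (ext_d \<alpha>x) ?\<eta> {a,b,c,d} z / g z - wedge (wedge (ext_d (g0 g)) \<alpha>x) ?\<eta> {a,b,c,d} z / (g z * g z)"
          unfolding \<omega>1_def
          by (rule Q[where g=g and z=z, OF fx f2 gz]) (unfold g_def \<alpha>x_def, rule cdz_eta2, rule cdz_eta1)
        also have "wedge (ext_d \<alpha>x) ?\<eta> {a,b,c,d} z = 0" unfolding \<alpha>x_def by (rule I3zero, rule C)
        also have "wedge (wedge (ext_d (g0 g)) \<alpha>x) ?\<eta> {a,b,c,d} z = 0" unfolding \<alpha>x_def by (rule P5, rule fd_dg0)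
        finally show ?thesis unfolding T o1 by simp
      qed
    qed
  qed
  show "\<exists>V \<omega>s. open V \<and> p \<in> V \<and> length \<omega>s = 2 \<and>
           (\<forall>\<omega>\<in>set \<omega>s. form_deg 1 \<omega> \<and> holo_form_on \<omega> V) \<and>
           (\<forall>S. \<forall>z\<in>V. ?\<eta> S z = wedge_list \<omega>s S z) \<and>
           (\<forall>\<omega>\<in>set \<omega>s. \<forall>S. \<forall>z\<in>V. wedge (ext_d \<omega>) ?\<eta> S z = 0)"
    apply (rule exI[of _ V], rule exI[of _ "[\<omega>1, \<alpha>y]"])
    using oV gp f1 fy h1 h2 dec int unfolding V_def by auto
qed

end


theorem mainTheorem15:
  fixes \<eta> :: "4 cform" and X Y :: "complex^4 \<Rightarrow> complex^4"
  assumes "form_deg 2 \<eta>"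
    and "homog_deg2_form \<eta>"
    and "integrable_form 2 \<eta>"
    and "ext_d \<eta> = interior X vol_form"
    and "\<exists>z. X z \<noteq> 0"
    and "linear_vf Y"
    and "\<eta> = interior Y (interior X vol_form)"
  shows "\<forall>s::complex.
     let R = (\<lambda>z. z); \<omega> = interior R \<eta>;
         \<eta>s = (\<lambda>S z. \<eta> S z + s * ext_d \<omega> S z)
     in integrable_form 2 \<eta>s \<and> wedge \<eta>s \<eta>s = (\<lambda>S z. 0) \<and>
        ext_d \<eta>s = interior X vol_form \<and> interior X \<eta>s = (\<lambda>S z. 0)"
proof -
  obtain a b c d :: 4 where fr: "four a b c d" using four_4 by blast
  interpret four a b c d by (rule fr)
  obtain A where XA: "X = (\<lambda>z. A *v z)" using X_lin[OF assms(2) assms(4)] by blast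
  obtain B where YB: "Y = (\<lambda>z. B *v z)" using Y_lin[OF assms(6)] by blast
  have eta: "\<eta> = interior (\<lambda>z. B *v z) (interior (\<lambda>z. A *v z) vol_form)" using assms(7) XA YB by simp
  have "interior (Uf B A) vol_form = interior (\<lambda>z. A *v z) vol_form"
    using assms(4) I1[of B A] unfolding eta XA by simp
  then have UfX: "Uf B A = (\<lambda>z. A *v z)" by (rule interior_inj)
  then have R: "\<And>z. Uf B A z = A *v z" by simp
  have t: "tr A = 0" by (rule trA0[OF R])
  show ?thesis
    unfolding Let_def
  proof (intro allI)
    fix s :: complex
    define \<eta>s where "\<eta>s = (\<lambda>S z. \<eta> S z + s * ext_d (interior (\<lambda>z. z) \<eta>) S z)"
    have es: "\<eta>s = interior (\<lambda>z. Bs s B *v z) (interior (\<lambda>z. A *v z) vol_form)"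
    proof (intro ext)
      fix S z
      have e1: "ext_d (interior (\<lambda>z. z) \<eta>) S z = 4 * \<eta> S z + (-1) * interior (\<lambda>z. z) (interior (\<lambda>z. A *v z) vol_form) S z"
        unfolding eta I2 UfX by simp
      have e2: "interior (\<lambda>z. Bs s B *v z) (interior (\<lambda>z. A *v z) vol_form) S z =
          (1 + 4 * s) * \<eta> S z - s * interior (\<lambda>z. z) (interior (\<lambda>z. A *v z) vol_form) S z"
        unfolding Bs_mv interior_lin eta by simp
      show "\<eta>s S z = interior (\<lambda>z. Bs s B *v z) (interior (\<lambda>z. A *v z) vol_form) S z"
        by (simp only: \<eta>s_def e1 e2) (simp add: algebra_simps)
    qed
    have UfB: "Uf (Bs s B) A = (\<lambda>z. A *v z)" by (rule ext, rule Uf_Bs[OF R t])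
    have "integrable_form 2 \<eta>s" unfolding es by (rule integ, rule uu_Bs[OF R t])
    moreover have "wedge \<eta>s \<eta>s = (\<lambda>S z. 0)" unfolding es by (rule P1)
    moreover have "ext_d \<eta>s = interior X vol_form" unfolding es I1 UfB XA ..
    moreover have "interior X \<eta>s = (\<lambda>S z. 0)" unfolding es XA by (rule P2)
    ultimately show "integrable_form 2 (\<lambda>S z. \<eta> S z + s * ext_d (interior (\<lambda>z. z) \<eta>) S z) \<and>
         wedge (\<lambda>S z. \<eta> S z + s * ext_d (interior (\<lambda>z. z) \<eta>) S z)
          (\<lambda>S z. \<eta> S z + s * ext_d (interior (\<lambda>z. z) \<eta>) S z) = (\<lambda>S z. 0) \<and>
         ext_d (\<lambda>S z. \<eta> S z + s * ext_d (interior (\<lambda>z. z) \<eta>) S z) = interior X vol_form \<and>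
         interior X (\<lambda>S z. \<eta> S z + s * ext_d (interior (\<lambda>z. z) \<eta>) S z) = (\<lambda>S z. 0)"
      unfolding \<eta>s_def by blast
  qed
qed



end
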